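(* Let $1\le q_1<q_2<\cdots$ be a strictly increasing sequence of integers with partial sums $S_n=q_1+\dots+q_n$. For each $n\in\mathbb{N}$ write $$f_n(x)=(1+x^{q_1})\cdots(1+x^{q_n})=\sum_{m=0}^{S_n}\gamma_m(n)x^m.$$ Suppose there exist positive integers $k_0$ and $n_0$ such that $$2k_0+q_{n+1}\le S_n\quad\text{for all } n\ge n_0,\qquad\text{and}\qquad \gamma_m(n_0)\ge 1\quad\text{for all integers } m \text{ with } k_0\le m\le S_{n_0}-k_0.$$ Then every integer $N\ge k_0$ is a sum of one or more distinct members of $\{q_1,q_2,\dots\}$. *)

theory Defs
  imports "HOL-Computational_Algebra.Polynomial"
begin

text \<open>The sequence is q 1, q 2, ... (values at index 0 are irrelevant).\<close>

definition S :: "(nat \<Rightarrow> nat) \<Rightarrow> nat \<Rightarrow> nat" where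
  "S q n = (\<Sum>i=1..n. q i)"

definition f :: "(nat \<Rightarrow> nat) \<Rightarrow> nat \<Rightarrow> int poly" where
  "f q n = (\<Prod>i=1..n. 1 + monom 1 (q i))"

definition gamma :: "(nat \<Rightarrow> nat) \<Rightarrow> nat \<Rightarrow> nat \<Rightarrow> int" where
  "gamma q n m = coeff (f q n) m"

end

theory Submission
  imports Defs
begin

lemma coeff_step:
  "coeff (p * (1 + monom (1::int) k)) m = coeff p m + (if k \<le> m then coeff p (m - k) else 0)"
  by (simp add: distrib_left mult.commute[of p] coeff_monom_mult)

lemma f_Suc: "f q (Suc n) = f q n * (1 + monom 1 (q (Suc n)))"
  unfolding f_def by (simp add: prod.nat_ivl_Suc')

lemma S_Suc: "S q (Suc n) = S q n + q (Suc n)"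
  unfolding S_def by simp

lemma sub_exists:
  "coeff (f q n) m \<noteq> 0 \<Longrightarrow> \<exists>I \<subseteq> {1..n}. sum q I = m"
proof (induction n arbitrary: m)
  case 0
  then have "m = 0" by (simp add: f_def coeff_1 split: if_splits)
  then show ?case by auto
next
  case (Suc n)
  show ?case
  proof (cases "coeff (f q n) m = 0")
    case False
    then obtain I where "I \<subseteq> {1..n}" "sum q I = m" using Suc.IH by blast
    then show ?thesis by (intro exI[of _ I]) auto
  next
    case True
    with Suc.prems have h: "q (Suc n) \<le> m" "coeff (f q n) (m - q (Suc n)) \<noteq> 0"
      by (auto simp: f_Suc coeff_step split: if_splits)
    then obtain I where I: "I \<subseteq> {1..n}" "sum q I = m - q (Suc n)" using Suc.IH by blast
    have "Suc n \<notin> I" using I by auto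
    moreover have "finite I" using I finite_subset by blast
    ultimately have "sum q (insert (Suc n) I) = m" using I h by simp
    moreover have "insert (Suc n) I \<subseteq> {1..Suc n}" using I by auto
    ultimately show ?thesis by blast
  qed
qed

lemma S_ge: "(\<And>i. i \<ge> 1 \<Longrightarrow> 1 \<le> q i) \<Longrightarrow> n \<le> S q n"
proof (induction n)
  case 0 then show ?case by simp
next
  case (Suc n)
  have "1 \<le> q (Suc n)" using Suc.prems by simp
  then show ?case using Suc.IH[OF Suc.prems] by (simp add: S_Suc)
qed

lemma q_mono: fixes q :: "nat \<Rightarrow> nat" shows "(\<And>i. i \<ge> 1 \<Longrightarrow> q i < q (Suc i)) \<Longrightarrow> 1 \<le> i \<Longrightarrow> i < j \<Longrightarrow> q i < q j"
proof (induction j)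
  case 0 then show ?case by simp
next
  case (Suc j)
  show ?case
  proof (cases "i < j")
    case True
    then have "q i < q j" using Suc by blast
    moreover have "q j < q (Suc j)" using Suc.prems True by simp
    ultimately show ?thesis by (rule less_trans)
  next
    case False
    then have "i = j" using Suc.prems by simp
    then show ?thesis using Suc.prems by simp
  qed
qed

theorem theorem2p1:
  fixes q :: "nat \<Rightarrow> nat" and k0 n0 :: nat
  assumes q_pos: "\<And>i. i \<ge> 1 \<Longrightarrow> 1 \<le> q i"
    and q_inc: "\<And>i. i \<ge> 1 \<Longrightarrow> q i < q (Suc i)"
    and k0_pos: "k0 \<ge> 1" and n0_pos: "n0 \<ge> 1"
    and growth: "\<And>n. n \<ge> n0 \<Longrightarrow> 2 * k0 + q (Suc n) \<le> S q n"
    and coeffs: "\<And>m. k0 \<le> m \<Longrightarrow> m \<le> S q n0 - k0 \<Longrightarrow> gamma q n0 m \<ge> 1"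
  shows "\<forall>N::nat. N \<ge> k0 \<longrightarrow>
           (\<exists>B. finite B \<and> B \<noteq> {} \<and> B \<subseteq> q ` {1..} \<and> N = \<Sum>B)"
proof -
  have rep: "\<forall>m. k0 \<le> m \<longrightarrow> m \<le> S q n - k0 \<longrightarrow> (\<exists>I \<subseteq> {1..n}. sum q I = m)"
    if "n0 \<le> n" for n
    using that
  proof (induction n rule: dec_induct)
    case base
    show ?case
    proof (intro allI impI)
      fix m assume "k0 \<le> m" "m \<le> S q n0 - k0"
      then have "coeff (f q n0) m \<noteq> 0" using coeffs[of m] unfolding gamma_def by auto
      then show "\<exists>I \<subseteq> {1..n0}. sum q I = m" by (rule sub_exists)
    qed
  next
    case (step n)
    show ?case
    proof (intro allI impI)
      fix m assume m: "k0 \<le> m" "m \<le> S q (Suc n) - k0"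
      have g: "2 * k0 + q (Suc n) \<le> S q n" using growth step.hyps(1) by simp
      show "\<exists>I \<subseteq> {1..Suc n}. sum q I = m"
      proof (cases "m \<le> S q n - k0")
        case True
        then obtain I where "I \<subseteq> {1..n}" "sum q I = m" using step.IH m by blast
        then show ?thesis by (intro exI[of _ I]) auto
      next
        case False
        have "k0 \<le> m - q (Suc n)" "m - q (Suc n) \<le> S q n - k0" "q (Suc n) \<le> m"
          using False g m by (auto simp: S_Suc)
        then obtain I where I: "I \<subseteq> {1..n}" "sum q I = m - q (Suc n)" using step.IH by blast
        have "Suc n \<notin> I" using I by auto
        moreover have "finite I" using I finite_subset by blast
        ultimately have "sum q (insert (Suc n) I) = m" using I \<open>q (Suc n) \<le> m\<close> by simp
        moreover have "insert (Suc n) I \<subseteq> {1..Suc n}" using I by auto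
        ultimately show ?thesis by blast
      qed
    qed
  qed
  have inj: "inj_on q {1..}"
  proof (rule inj_onI)
    fix i j assume ij: "i \<in> {1..}" "j \<in> {1..}" "q i = q j"
    show "i = j"
    proof (rule ccontr)
      assume "i \<noteq> j"
      then have "i < j \<or> j < i" by arith
      then show False using q_mono[of q, OF q_inc] ij by (metis atLeast_iff less_irrefl)
    qed
  qed
  show ?thesis
  proof (intro allI impI)
    fix N assume N: "k0 \<le> N"
    define n where "n = n0 + N + k0"
    have "n \<le> S q n" using S_ge q_pos by blast
    then have "N \<le> S q n - k0" unfolding n_def by simp
    then obtain I where I: "I \<subseteq> {1..n}" "sum q I = N" using rep[of n] N n_def by auto
    have fI: "finite I" using I finite_subset by blast
    have "inj_on q I" proof (rule inj_on_subset[OF inj])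
      show "I \<subseteq> {1..}" using I by auto
    qed
    then have "\<Sum>(q ` I) = N" using I by (simp add: sum.reindex)
    moreover have "I \<noteq> {}" using I N k0_pos by auto
    ultimately show "\<exists>B. finite B \<and> B \<noteq> {} \<and> B \<subseteq> q ` {1..} \<and> N = \<Sum>B"
      using fI I by (intro exI[of _ "q ` I"]) auto
  qed
qed

end
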